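(* Let $s:\mathcal{X}\times\mathcal{Y}\to\mathbb{R}$ be measurable, $S_1,\dots,S_d$ probability distributions on $\mathcal{X}\times\mathcal{Y}$, $f$ a function as described in the context and $\rho>0$. Let $F_1,\dots,F_d$ be the c.d.f.'s of $s\#S_1,\dots,s\#S_d$ and $F_{\min}(x)=\min_{1\le i\le d}F_i(x)$. Let $$\mathcal{P}_{f,\rho}\coloneqq\{S\text{ a distribution on }\mathbb{R}:\exists S_0\in\mathcal{CH}(s\#S_1,\dots,s\#S_d),\ D_f(S\Vert S_0)\le\rho\}$$ and $\widetilde F(t;\mathcal{P}_{f,\rho})\coloneqq\inf_{P\in\mathcal{P}_{f,\rho}}P(S\le t)$. Then for every $t\in\mathbb{R}$, $$\widetilde F(t;\mathcal{P}_{f,\rho})=g_{f,\rho}\left(F_1(t),\dots,F_d(t)\right)=g_{f,\rho}\left(F_{\min}(t)\right).$$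
   Context: $f:\mathbb{R}\to\mathbb{R}\cup\{+\infty\}$ is a closed convex function with $f(1)=0$ and $f(t)=+\infty$ for $t<0$; for $P\ll Q$, $D_f(P\Vert Q)\coloneqq\int f\left(\frac{dP}{dQ}\right)dQ$. $\mathcal{CH}(P_1,\dots,P_d)\coloneqq\{\sum_i\lambda_iP_i:\lambda_i\ge0,\sum_i\lambda_i=1\}$; $s\#T$ is the push-forward $(s\#T)(A)=T(s^{-1}(A))$. With $h(z,\beta)\coloneqq\beta f(z/\beta)+(1-\beta)f((1-z)/(1-\beta))$, define for $\beta_1,\dots,\beta_d\in[0,1]$: $g_{f,\rho}(\beta_1,\dots,\beta_d)\coloneqq\inf\{z\in[0,1]:\inf_{\lambda\ge0,\sum_i\lambda_i=1}h(z,\sum_i\lambda_i\beta_i)\le\rho\}$; for $d=1$, $g_{f,\rho}(\beta)=\inf\{z\in[0,1]:h(z,\beta)\le\rho\}$. *)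

theory Defs
  imports "HOL-Probability.Probability"
begin

definition admissible_f :: "(real \<Rightarrow> ereal) \<Rightarrow> bool" where
  "admissible_f f \<longleftrightarrow>
     (\<forall>x. f x \<noteq> -\<infinity>) \<and>
     (\<forall>x y u. 0 < u \<and> u < 1 \<longrightarrow>
        f ((1 - u) * x + u * y) \<le> ereal (1 - u) * f x + ereal u * f y) \<and>
     (\<forall>c. closed {x. f x \<le> c}) \<and>
     f 1 = 0 \<and>
     (\<forall>t<0. f t = \<infinity>)"

text \<open>f-divergence D_f(P||Q) = \<integral> f(dP/dQ) dQ, for P \<ll> Q, as an extended real
  (positive part minus negative part).\<close>
definition f_div :: "(real \<Rightarrow> ereal) \<Rightarrow> 'a measure \<Rightarrow> 'a measure \<Rightarrow> ereal" where
  "f_div f P Q =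
     enn2ereal (\<integral>\<^sup>+ x. e2ennreal (f (enn2real (RN_deriv Q P x))) \<partial>Q)
   - enn2ereal (\<integral>\<^sup>+ x. e2ennreal (- f (enn2real (RN_deriv Q P x))) \<partial>Q)"

text \<open>Perspective b * f(a / b), with the convention (consistent with the absolute-continuity
  requirement in D_f) that 0 * f(0/0) = 0 and 0 * f(a/0) = +\<infinity> for a > 0.\<close>
definition persp :: "(real \<Rightarrow> ereal) \<Rightarrow> real \<Rightarrow> real \<Rightarrow> ereal" where
  "persp f b a = (if b > 0 then ereal b * f (a / b) else if a = 0 then 0 else \<infinity>)"

definition hfun :: "(real \<Rightarrow> ereal) \<Rightarrow> real \<Rightarrow> real \<Rightarrow> ereal" where
  "hfun f z \<beta> = persp f \<beta> z + persp f (1 - \<beta>) (1 - z)"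

definition wsimplex :: "nat \<Rightarrow> (nat \<Rightarrow> real) set" where
  "wsimplex d = {w. (\<forall>i\<in>{1..d}. 0 \<le> w i) \<and> (\<Sum>i=1..d. w i) = 1}"

definition g_vec :: "(real \<Rightarrow> ereal) \<Rightarrow> real \<Rightarrow> nat \<Rightarrow> (nat \<Rightarrow> real) \<Rightarrow> real" where
  "g_vec f \<rho> d \<beta> =
     Inf {z \<in> {0..1}. (INF w\<in>wsimplex d. hfun f z (\<Sum>i=1..d. w i * \<beta> i)) \<le> ereal \<rho>}"

definition g_one :: "(real \<Rightarrow> ereal) \<Rightarrow> real \<Rightarrow> real \<Rightarrow> real" where
  "g_one f \<rho> \<beta> = Inf {z \<in> {0..1}. hfun f z \<beta> \<le> ereal \<rho>}"

definition in_conv_hull :: "nat \<Rightarrow> (nat \<Rightarrow> 'a measure) \<Rightarrow> ('a \<Rightarrow> real) \<Rightarrow> real measure \<Rightarrow> bool" where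
  "in_conv_hull d S s S0 \<longleftrightarrow>
     sets S0 = sets borel \<and>
     (\<exists>w\<in>wsimplex d. \<forall>A\<in>sets borel.
        emeasure S0 A = (\<Sum>i=1..d. ennreal (w i) * emeasure (distr (S i) borel s) A))"

text \<open>The ambiguity set P_{f,\<rho>}: distributions S on the reals with D_f(S||S0) \<le> \<rho>
  for some S0 in the convex hull (D_f only defined, hence required, for S \<ll> S0).\<close>
definition amb_set :: "(real \<Rightarrow> ereal) \<Rightarrow> real \<Rightarrow> nat \<Rightarrow> (nat \<Rightarrow> 'a measure) \<Rightarrow> ('a \<Rightarrow> real)
    \<Rightarrow> real measure set" where
  "amb_set f \<rho> d S s = {P. prob_space P \<and> sets P = sets borel \<and>
     (\<exists>S0. in_conv_hull d S s S0 \<and> absolutely_continuous S0 P \<and> f_div f P S0 \<le> ereal \<rho>)}"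

definition push_cdf :: "'a measure \<Rightarrow> ('a \<Rightarrow> real) \<Rightarrow> real \<Rightarrow> real" where
  "push_cdf S s x = measure (distr S borel s) {..x}"

definition worst_cdf :: "(real \<Rightarrow> ereal) \<Rightarrow> real \<Rightarrow> nat \<Rightarrow> (nat \<Rightarrow> 'a measure) \<Rightarrow> ('a \<Rightarrow> real)
    \<Rightarrow> real \<Rightarrow> real" where
  "worst_cdf f \<rho> d S s t = Inf ((\<lambda>P. measure P {..t}) ` amb_set f \<rho> d S s)"

end

theory Submission
  imports Defs "HOL-Probability.Probability"
begin


lemma adm_convex_closed:
  assumes adm: "admissible_f f" and u: "0 \<le> u" "u \<le> 1"
  shows "f ((1 - u) * x + u * y) \<le> ereal (1 - u) * f x + ereal u * f y"
proof -
  have nm: "\<And>x. f x \<noteq> -\<infinity>" using adm unfolding admissible_f_def by blast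
  consider "u = 0" | "u = 1" | "0 < u \<and> u < 1" using u by linarith
  then show ?thesis
  proof cases
    case 1 then show ?thesis by (simp add: zero_ereal_def[symmetric])
  next
    case 2 then show ?thesis by (simp add: zero_ereal_def[symmetric])
  next
    case 3 then show ?thesis using adm unfolding admissible_f_def by blast
  qed
qed

lemma epi_convex:
  assumes adm: "admissible_f f"
  shows "convex {p::real\<times>real. f (fst p) \<le> ereal (snd p)}"
  unfolding convex_def
proof (intro ballI allI impI)
  fix p q :: "real \<times> real" and u v :: real
  assume p: "p \<in> {p. f (fst p) \<le> ereal (snd p)}" and q: "q \<in> {p. f (fst p) \<le> ereal (snd p)}"
    and uv: "0 \<le> u" "0 \<le> v" "u + v = 1"
  have u1: "u = 1 - v" using uv by simp
  have "f (fst (u *\<^sub>R p + v *\<^sub>R q)) = f ((1 - v) * fst p + v * fst q)" using u1 by simp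
  also have "\<dots> \<le> ereal (1 - v) * f (fst p) + ereal v * f (fst q)"
    using adm_convex_closed[OF adm, of v] uv by simp
  also have "\<dots> \<le> ereal (1 - v) * ereal (snd p) + ereal v * ereal (snd q)"
    using p q uv u1 by (intro add_mono ereal_mult_left_mono) auto
  also have "\<dots> = ereal (snd (u *\<^sub>R p + v *\<^sub>R q))" using u1 by simp
  finally show "u *\<^sub>R p + v *\<^sub>R q \<in> {p. f (fst p) \<le> ereal (snd p)}" by simp
qed

lemma epi_closed:
  assumes adm: "admissible_f f"
  shows "closed {p::real\<times>real. f (fst p) \<le> ereal (snd p)}"
  unfolding closed_sequential_limits
proof (intro allI impI, elim conjE)
  fix X :: "nat \<Rightarrow> real \<times> real" and l
  assume X: "\<forall>n. X n \<in> {p. f (fst p) \<le> ereal (snd p)}" and lim: "X \<longlonglongrightarrow> l"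
  have cl: "\<And>c. closed {x. f x \<le> c}" using adm unfolding admissible_f_def by blast
  have l1: "(\<lambda>n. fst (X n)) \<longlonglongrightarrow> fst l" using lim by (rule tendsto_fst)
  have l2: "(\<lambda>n. snd (X n)) \<longlonglongrightarrow> snd l" using lim by (rule tendsto_snd)
  have "f (fst l) \<le> ereal (snd l) + ereal e" if e: "e > 0" for e
  proof -
    have ev: "eventually (\<lambda>n. snd (X n) < snd l + e) sequentially"
      by (rule order_tendstoD(2)[OF l2]) (use e in simp)
    have "eventually (\<lambda>n. fst (X n) \<in> {x. f x \<le> ereal (snd l + e)}) sequentially"
      using ev
    proof (rule eventually_mono)
      fix n assume "snd (X n) < snd l + e"
      then have "ereal (snd (X n)) \<le> ereal (snd l + e)" by simp
      moreover have "f (fst (X n)) \<le> ereal (snd (X n))" using X by blast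
      ultimately have "f (fst (X n)) \<le> ereal (snd l + e)" by (rule order_trans[rotated])
      then show "fst (X n) \<in> {x. f x \<le> ereal (snd l + e)}" by simp
    qed
    then have "fst l \<in> {x. f x \<le> ereal (snd l + e)}"
      by (rule Lim_in_closed_set[OF cl _ trivial_limit_sequentially l1])
    then show ?thesis by simp
  qed
  then have "f (fst l) \<le> ereal (snd l)" by (rule ereal_le_epsilon2)
  then show "l \<in> {p. f (fst p) \<le> ereal (snd p)}" by simp
qed

lemma sep_step:
  assumes adm: "admissible_f f" and c: "ereal c < f m"
  shows "\<exists>a1 a2 b. 0 \<le> a2 \<and> a1 * m + a2 * c < b \<and> (\<forall>x y. f x \<le> ereal y \<longrightarrow> b < a1 * x + a2 * y)"
proof -
  have "(m, c) \<notin> {p::real\<times>real. f (fst p) \<le> ereal (snd p)}" using c by simp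
  from separating_hyperplane_closed_point[OF epi_convex[OF adm] epi_closed[OF adm] this]
  obtain a b where ab: "inner a (m, c) < b" "\<forall>x\<in>{p::real\<times>real. f (fst p) \<le> ereal (snd p)}. b < inner a x"
    by blast
  obtain a1 a2 where a: "a = (a1, a2)" by (cases a)
  have H: "\<forall>x y. f x \<le> ereal y \<longrightarrow> b < a1 * x + a2 * y"
  proof (intro allI impI)
    fix x y assume "f x \<le> ereal y"
    then show "b < a1 * x + a2 * y" using ab(2)[rule_format, of "(x, y)"] a by simp
  qed
  have f1: "f 1 = 0" using adm unfolding admissible_f_def by blast
  have "0 \<le> a2"
  proof (rule ccontr)
    assume neg: "\<not> 0 \<le> a2"
    define y where "y = (\<bar>a1\<bar> + \<bar>b\<bar> + 1) / (- a2)"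
    have na: "- a2 > 0" using neg by simp
    have y0: "y \<ge> 0" unfolding y_def by (rule divide_nonneg_pos) (use na in auto)
    have "a2 * y = - (\<bar>a1\<bar> + \<bar>b\<bar> + 1)" using neg by (simp add: y_def)
    moreover have "b < a1 * 1 + a2 * y" using H[rule_format, of 1 y] f1 y0 by simp
    ultimately show False by linarith
  qed
  then show ?thesis using H ab(1) a by (intro exI[of _ a1] exI[of _ a2] exI[of _ b]) simp
qed

lemma aff_below:
  assumes H: "\<forall>x y. f x \<le> ereal y \<longrightarrow> b < a1 * x + a2 * y" and a2: "a2 > 0"
    and nm: "f x \<noteq> -\<infinity>"
  shows "ereal (b / a2 + - a1 / a2 * x) \<le> f x"
proof (cases "f x")
  case (real y)
  then have "b < a1 * x + a2 * y" using H by simp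
  then have "b / a2 + - a1 / a2 * x < y" using a2 by (simp add: field_simps)
  then show ?thesis using real by simp
next
  case PInf then show ?thesis by simp
next
  case MInf then show ?thesis using nm by simp
qed

lemma minorant_finite:
  assumes adm: "admissible_f f" and c: "ereal c < f m" and fin: "f m < \<infinity>"
  shows "\<exists>p q. (\<forall>x. ereal (p + q * x) \<le> f x) \<and> c < p + q * m"
proof -
  obtain a1 a2 b where A: "0 \<le> a2" "a1 * m + a2 * c < b" "\<forall>x y. f x \<le> ereal y \<longrightarrow> b < a1 * x + a2 * y"
    using sep_step[OF adm c] by blast
  have nm: "\<And>x. f x \<noteq> -\<infinity>" using adm unfolding admissible_f_def by blast
  obtain y0 where y0: "f m = ereal y0" using fin nm[of m] by (cases "f m") auto
  have "b < a1 * m + a2 * y0" using A(3) y0 by simp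
  then have a2: "a2 > 0" using A(1,2) by (cases "a2 = 0") auto
  have "\<forall>x. ereal (b / a2 + - a1 / a2 * x) \<le> f x"
    using aff_below[OF A(3) a2 nm] by blast
  moreover have "c < b / a2 + - a1 / a2 * m" using A(2) a2 by (simp add: field_simps)
  ultimately show ?thesis by blast
qed

lemma minorant:
  assumes adm: "admissible_f f" and c: "ereal c < f m"
  shows "\<exists>p q. (\<forall>x. ereal (p + q * x) \<le> f x) \<and> c < p + q * m"
proof -
  obtain a1 a2 b where A: "0 \<le> a2" "a1 * m + a2 * c < b" "\<forall>x y. f x \<le> ereal y \<longrightarrow> b < a1 * x + a2 * y"
    using sep_step[OF adm c] by blast
  have nm: "\<And>x. f x \<noteq> -\<infinity>" using adm unfolding admissible_f_def by blast
  have f1: "f 1 = 0" using adm unfolding admissible_f_def by blast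
  obtain p0 q0 where L0: "\<forall>x. ereal (p0 + q0 * x) \<le> f x"
    using minorant_finite[OF adm, of "-1" 1] f1 by auto
  show ?thesis
  proof (cases "a2 = 0")
    case False
    then have a2: "a2 > 0" using A(1) by simp
    have "\<forall>x. ereal (b / a2 + - a1 / a2 * x) \<le> f x"
      using aff_below[OF A(3) a2 nm] by blast
    moreover have "c < b / a2 + - a1 / a2 * m" using A(2) a2 by (simp add: field_simps)
    ultimately show ?thesis by blast
  next
    case True
    have pos: "b - a1 * m > 0" using A(2) True by simp
    define K where "K = (\<bar>c - p0 - q0 * m\<bar> + 1) / (b - a1 * m)"
    have K0: "K \<ge> 0" using pos by (simp add: K_def)
    have KK: "K * (b - a1 * m) = \<bar>c - p0 - q0 * m\<bar> + 1" using pos by (simp add: K_def)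
    have "ereal (p0 + K * b + (q0 - K * a1) * x) \<le> f x" for x
    proof (cases "f x")
      case (real y)
      then have "b < a1 * x + a2 * y" using A(3) by simp
      then have "b < a1 * x" using True by simp
      then have "K * (b - a1 * x) \<le> 0" using K0 by (simp add: mult_nonneg_nonpos)
      then have "p0 + K * b + (q0 - K * a1) * x \<le> p0 + q0 * x" by (simp add: algebra_simps)
      then have "ereal (p0 + K * b + (q0 - K * a1) * x) \<le> ereal (p0 + q0 * x)" by simp
      also have "\<dots> \<le> f x" using L0 by blast
      finally show ?thesis .
    next
      case PInf then show ?thesis by simp
    next
      case MInf then show ?thesis using nm by simp
    qed
    moreover
    have "p0 + K * b + (q0 - K * a1) * m = p0 + q0 * m + K * (b - a1 * m)" by (simp add: algebra_simps)
    then have "c < p0 + K * b + (q0 - K * a1) * m" using KK by linarith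
    ultimately show ?thesis by blast
  qed
qed



lemma f_meas:
  assumes adm: "admissible_f f"
  shows "f \<in> borel_measurable borel"
proof (rule borel_measurableI_le)
  fix y
  have "closed {x. f x \<le> y}" using adm unfolding admissible_f_def by blast
  then show "{x \<in> space borel. f x \<le> y} \<in> sets borel" by simp
qed

lemma pw1:
  assumes "ereal l \<le> v"
  shows "e2ennreal (- v) \<le> ennreal (- l)"
proof (cases v)
  case (real a)
  then have "l \<le> a" using assms by simp
  then show ?thesis using real by (simp add: ennreal_leI)
qed (use assms in \<open>auto simp: e2ennreal_neg\<close>)

lemma pw2:
  assumes "ereal l \<le> v"
  shows "e2ennreal (- v) + ennreal l \<le> e2ennreal v + ennreal (- l)"
proof (cases v)
  case (real a)
  then have la: "l \<le> a" using assms by simp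
  consider "0 \<le> l" | "l < 0 \<and> 0 \<le> a" | "a < 0" by linarith
  then show ?thesis
  proof cases
    case 1 then show ?thesis using real la by (simp add: ennreal_neg ennreal_leI)
  next
    case 2 then show ?thesis using real la by (simp add: ennreal_neg)
  next
    case 3 then show ?thesis using real la by (simp add: ennreal_neg ennreal_leI)
  qed
qed (use assms in \<open>auto simp: e2ennreal_neg\<close>)

lemma enn_ineq:
  fixes a c d e :: ennreal
  assumes "c + e \<le> a + d" "c \<noteq> \<infinity>" "d \<noteq> \<infinity>"
  shows "enn2ereal e - enn2ereal d \<le> enn2ereal a - enn2ereal c"
proof -
  have "enn2ereal (c + e) \<le> enn2ereal (a + d)" using assms(1) by (simp add: less_eq_ennreal.rep_eq)
  then have H: "enn2ereal c + enn2ereal e \<le> enn2ereal a + enn2ereal d" by (simp add: plus_ennreal.rep_eq)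
  obtain c' where c': "enn2ereal c = ereal c'"
    using assms(2) by (cases c rule: ennreal_cases) auto
  obtain d' where d': "enn2ereal d = ereal d'"
    using assms(3) by (cases d rule: ennreal_cases) auto
  show ?thesis using H c' d' enn2ereal_nonneg[of a] enn2ereal_nonneg[of e]
    by (cases "enn2ereal a"; cases "enn2ereal e") auto
qed



lemma RN_facts:
  fixes Q P :: "'a measure"
  assumes Q: "prob_space Q" and P: "prob_space P" and sP: "sets P = sets Q"
    and ac: "absolutely_continuous Q P" and B: "B \<in> sets Q"
  shows "integrable Q (\<lambda>x. enn2real (RN_deriv Q P x) * indicator B x)"
    and "(\<integral>x. enn2real (RN_deriv Q P x) * indicator B x \<partial>Q) = measure P B"
proof -
  interpret Q: prob_space Q by fact
  interpret P: prob_space P by fact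
  have RN: "density Q (RN_deriv Q P) = P" using Q.density_RN_deriv[OF ac sP] .
  have fin: "AE x in Q. RN_deriv Q P x \<noteq> \<infinity>"
    using Q.RN_deriv_finite[OF prob_space_imp_sigma_finite[OF P] ac sP] .
  have eP: "emeasure P B = (\<integral>\<^sup>+x. RN_deriv Q P x * indicator B x \<partial>Q)"
  proof -
    have "emeasure (density Q (RN_deriv Q P)) B = (\<integral>\<^sup>+x. RN_deriv Q P x * indicator B x \<partial>Q)"
      by (rule emeasure_density) (use B in auto)
    then show ?thesis using RN by simp
  qed
  have "(\<integral>\<^sup>+x. ennreal (enn2real (RN_deriv Q P x) * indicator B x) \<partial>Q)
      = (\<integral>\<^sup>+x. RN_deriv Q P x * indicator B x \<partial>Q)"
  proof (rule nn_integral_cong_AE)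
    show "AE x in Q. ennreal (enn2real (RN_deriv Q P x) * indicator B x) = RN_deriv Q P x * indicator B x"
      using fin
    proof (rule eventually_mono)
      fix x assume "RN_deriv Q P x \<noteq> \<infinity>"
      then show "ennreal (enn2real (RN_deriv Q P x) * indicator B x) = RN_deriv Q P x * indicator B x"
        by (simp split: split_indicator add: less_top)
    qed
  qed
  also have "\<dots> = ennreal (measure P B)" using eP[symmetric] P.emeasure_eq_measure by simp
  finally have "(\<integral>\<^sup>+x. ennreal (enn2real (RN_deriv Q P x) * indicator B x) \<partial>Q) = ennreal (measure P B)" .
  then have "integrable Q (\<lambda>x. enn2real (RN_deriv Q P x) * indicator B x) \<and>
      (\<integral>x. enn2real (RN_deriv Q P x) * indicator B x \<partial>Q) = measure P B"
    by (subst (asm) nn_integral_eq_integrable) (use B in auto)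
  then show "integrable Q (\<lambda>x. enn2real (RN_deriv Q P x) * indicator B x)"
    and "(\<integral>x. enn2real (RN_deriv Q P x) * indicator B x \<partial>Q) = measure P B" by auto
qed

lemma piece:
  fixes Q P :: "'a measure"
  assumes adm: "admissible_f f" and Q: "prob_space Q" and P: "prob_space P" and sP: "sets P = sets Q"
    and ac: "absolutely_continuous Q P" and B: "B \<in> sets Q"
    and l: "\<forall>x. ereal (p + q * x) \<le> f x"
  shows "(\<integral>\<^sup>+x. e2ennreal (- f (enn2real (RN_deriv Q P x))) * indicator B x \<partial>Q) < \<infinity>"
    and "ereal (p * measure Q B + q * measure P B) \<le>
      enn2ereal (\<integral>\<^sup>+x. e2ennreal (f (enn2real (RN_deriv Q P x))) * indicator B x \<partial>Q)
      - enn2ereal (\<integral>\<^sup>+x. e2ennreal (- f (enn2real (RN_deriv Q P x))) * indicator B x \<partial>Q)"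
proof -
  interpret Q: prob_space Q by fact
  define r where "r = (\<lambda>x. enn2real (RN_deriv Q P x))"
  have fm[measurable]: "f \<in> borel_measurable borel" using f_meas[OF adm] .
  have rm[measurable]: "r \<in> borel_measurable Q" unfolding r_def by measurable
  note Bm[measurable] = B
  define g where "g = (\<lambda>x. (p + q * r x) * indicator B x :: real)"
  have ir: "integrable Q (\<lambda>x. r x * indicator B x)"
    and Ir: "(\<integral>x. r x * indicator B x \<partial>Q) = measure P B"
    using RN_facts[OF Q P sP ac B] unfolding r_def by auto
  have geq: "g = (\<lambda>x. p * indicator B x + q * (r x * indicator B x))"
    unfolding g_def by (auto simp: fun_eq_iff split: split_indicator)
  have iB: "integrable Q (\<lambda>x. indicator B x :: real)"
    using B by (intro integrable_real_indicator) (simp_all add: less_top[symmetric])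
  have ig: "integrable Q g" unfolding geq using ir iB by auto
  have Ig: "(\<integral>x. g x \<partial>Q) = p * measure Q B + q * measure P B"
    unfolding geq using ir iB Ir B by simp
  have gm[measurable]: "g \<in> borel_measurable Q" using ig by auto
  have fin1: "(\<integral>\<^sup>+x. ennreal (g x) \<partial>Q) \<noteq> \<infinity>" and fin2: "(\<integral>\<^sup>+x. ennreal (- g x) \<partial>Q) \<noteq> \<infinity>"
    using ig unfolding real_integrable_def by auto
  have Ig2: "ereal (\<integral>x. g x \<partial>Q) = enn2ereal (\<integral>\<^sup>+x. ennreal (g x) \<partial>Q) - enn2ereal (\<integral>\<^sup>+x. ennreal (- g x) \<partial>Q)"
    unfolding real_lebesgue_integral_def[OF ig] using fin1 fin2
    by (cases "(\<integral>\<^sup>+x. ennreal (g x) \<partial>Q)" rule: ennreal_cases;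
        cases "(\<integral>\<^sup>+x. ennreal (- g x) \<partial>Q)" rule: ennreal_cases) auto
  have pwA: "e2ennreal (- f (r x)) * indicator B x \<le> ennreal (- g x)" for x
    using pw1[OF l[rule_format, of "r x"]] by (auto simp: g_def split: split_indicator)
  have pwB: "e2ennreal (- f (r x)) * indicator B x + ennreal (g x)
      \<le> e2ennreal (f (r x)) * indicator B x + ennreal (- g x)" for x
    using pw2[OF l[rule_format, of "r x"]] by (auto simp: g_def split: split_indicator)
  have A1: "(\<integral>\<^sup>+x. e2ennreal (- f (r x)) * indicator B x \<partial>Q) \<le> (\<integral>\<^sup>+x. ennreal (- g x) \<partial>Q)"
    by (rule nn_integral_mono) (rule pwA)
  then show "(\<integral>\<^sup>+x. e2ennreal (- f (enn2real (RN_deriv Q P x))) * indicator B x \<partial>Q) < \<infinity>"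
    using fin2 unfolding r_def by (simp add: le_less_trans less_top)
  have "(\<integral>\<^sup>+x. e2ennreal (- f (r x)) * indicator B x \<partial>Q) + (\<integral>\<^sup>+x. ennreal (g x) \<partial>Q)
      = (\<integral>\<^sup>+x. e2ennreal (- f (r x)) * indicator B x + ennreal (g x) \<partial>Q)"
    by (rule nn_integral_add[symmetric]) auto
  also have "\<dots> \<le> (\<integral>\<^sup>+x. e2ennreal (f (r x)) * indicator B x + ennreal (- g x) \<partial>Q)"
    by (rule nn_integral_mono) (rule pwB)
  also have "\<dots> = (\<integral>\<^sup>+x. e2ennreal (f (r x)) * indicator B x \<partial>Q) + (\<integral>\<^sup>+x. ennreal (- g x) \<partial>Q)"
    by (rule nn_integral_add) auto
  finally have "enn2ereal (\<integral>\<^sup>+x. ennreal (g x) \<partial>Q) - enn2ereal (\<integral>\<^sup>+x. ennreal (- g x) \<partial>Q)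
      \<le> enn2ereal (\<integral>\<^sup>+x. e2ennreal (f (r x)) * indicator B x \<partial>Q)
        - enn2ereal (\<integral>\<^sup>+x. e2ennreal (- f (r x)) * indicator B x \<partial>Q)"
    by (rule enn_ineq) (use A1 fin2 in \<open>auto simp: top_unique\<close>)
  then show "ereal (p * measure Q B + q * measure P B) \<le>
      enn2ereal (\<integral>\<^sup>+x. e2ennreal (f (enn2real (RN_deriv Q P x))) * indicator B x \<partial>Q)
      - enn2ereal (\<integral>\<^sup>+x. e2ennreal (- f (enn2real (RN_deriv Q P x))) * indicator B x \<partial>Q)"
    using Ig Ig2 unfolding r_def by simp
qed



lemma ereal_split4:
  fixes a1 a2 c1 c2 :: ereal
  assumes "0 \<le> a1" "0 \<le> a2" "0 \<le> c1" "0 \<le> c2" "c1 \<noteq> \<infinity>" "c2 \<noteq> \<infinity>"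
  shows "(a1 + a2) - (c1 + c2) = (a1 - c1) + (a2 - c2)"
  using assms by (cases a1; cases a2; cases c1; cases c2) auto

lemma piece_persp:
  fixes Q P :: "'a measure"
  assumes adm: "admissible_f f" and Q: "prob_space Q" and P: "prob_space P" and sP: "sets P = sets Q"
    and ac: "absolutely_continuous Q P" and B: "B \<in> sets Q"
  shows "(\<integral>\<^sup>+x. e2ennreal (- f (enn2real (RN_deriv Q P x))) * indicator B x \<partial>Q) < \<infinity>"
    and "persp f (measure Q B) (measure P B) \<le>
      enn2ereal (\<integral>\<^sup>+x. e2ennreal (f (enn2real (RN_deriv Q P x))) * indicator B x \<partial>Q)
      - enn2ereal (\<integral>\<^sup>+x. e2ennreal (- f (enn2real (RN_deriv Q P x))) * indicator B x \<partial>Q)"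
proof -
  interpret Q: prob_space Q by fact
  interpret P: prob_space P by fact
  have f1: "f 1 = 0" using adm unfolding admissible_f_def by blast
  obtain p0 q0 where l0: "\<forall>x. ereal (p0 + q0 * x) \<le> f x"
    using minorant[OF adm, of "-1" 1] f1 by auto
  show "(\<integral>\<^sup>+x. e2ennreal (- f (enn2real (RN_deriv Q P x))) * indicator B x \<partial>Q) < \<infinity>"
    by (rule piece(1)[OF adm Q P sP ac B l0])
  let ?D = "enn2ereal (\<integral>\<^sup>+x. e2ennreal (f (enn2real (RN_deriv Q P x))) * indicator B x \<partial>Q)
      - enn2ereal (\<integral>\<^sup>+x. e2ennreal (- f (enn2real (RN_deriv Q P x))) * indicator B x \<partial>Q)"
  show "persp f (measure Q B) (measure P B) \<le> ?D"
  proof (cases "measure Q B = 0")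
    case True
    then have nB: "B \<in> null_sets Q" using B Q.emeasure_eq_measure by (simp add: null_sets_def)
    then have "B \<in> null_sets P" using ac unfolding absolutely_continuous_def by blast
    then have "measure P B = 0" by (simp add: measure_def null_sets_def)
    then have "persp f (measure Q B) (measure P B) = 0" using True by (simp add: persp_def)
    moreover have "?D = 0" by (simp add: nn_integral_null_set[OF nB])
    ultimately show ?thesis by simp
  next
    case False
    then have QB: "measure Q B > 0" using measure_nonneg[of Q B] by linarith
    define m where "m = measure P B / measure Q B"
    have Pm: "measure Q B * m = measure P B" using QB by (simp add: m_def)
    have "persp f (measure Q B) (measure P B) = ereal (measure Q B) * f m"
      using QB by (simp add: persp_def m_def)
    also have "\<dots> \<le> ?D"
    proof (rule dense_le)
      fix y assume y: "y < ereal (measure Q B) * f m"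
      show "y \<le> ?D"
      proof (cases y)
        case MInf then show ?thesis by simp
      next
        case PInf then show ?thesis using y by simp
      next
        case (real y0)
        have "ereal (y0 / measure Q B) < f m"
        proof (cases "f m")
          case (real v)
          then have "y0 < measure Q B * v" using y \<open>y = ereal y0\<close> by simp
          then have "y0 / measure Q B < v" using QB by (simp add: divide_less_eq mult.commute)
          then show ?thesis using real by simp
        next
          case PInf then show ?thesis by simp
        next
          case MInf
          have "f m \<noteq> -\<infinity>" using adm unfolding admissible_f_def by blast
          with MInf show ?thesis by simp
        qed
        then obtain p q where pq: "\<forall>x. ereal (p + q * x) \<le> f x" "y0 / measure Q B < p + q * m"
          using minorant[OF adm] by blast
        have "y0 < measure Q B * (p + q * m)" using pq(2) QB by (simp add: divide_less_eq mult.commute)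
        also have "\<dots> = p * measure Q B + q * measure P B" using Pm by (simp add: algebra_simps)
        finally have "ereal y0 \<le> ereal (p * measure Q B + q * measure P B)" by simp
        also have "\<dots> \<le> ?D" by (rule piece(2)[OF adm Q P sP ac B pq(1)])
        finally show ?thesis using real by simp
      qed
    qed
    finally show ?thesis .
  qed
qed

lemma data_processing:
  fixes Q P :: "'a measure"
  assumes adm: "admissible_f f" and Q: "prob_space Q" and P: "prob_space P" and sP: "sets P = sets Q"
    and ac: "absolutely_continuous Q P" and A: "A \<in> sets Q"
  shows "hfun f (measure P A) (measure Q A) \<le> f_div f P Q"
proof -
  interpret Q: prob_space Q by fact
  interpret P: prob_space P by fact
  define Ac where "Ac = space Q - A"
  have Ac: "Ac \<in> sets Q" unfolding Ac_def using A by auto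
  have fm[measurable]: "f \<in> borel_measurable borel" using f_meas[OF adm] .
  note [measurable] = A Ac
  let ?r = "\<lambda>x. enn2real (RN_deriv Q P x)"
  let ?Fp = "\<lambda>x. e2ennreal (f (?r x))" and ?Fm = "\<lambda>x. e2ennreal (- f (?r x))"
  have split: "(\<integral>\<^sup>+x. G x \<partial>Q) = (\<integral>\<^sup>+x. G x * indicator A x \<partial>Q) + (\<integral>\<^sup>+x. G x * indicator Ac x \<partial>Q)"
    if G[measurable]: "G \<in> borel_measurable Q" for G :: "'a \<Rightarrow> ennreal"
  proof -
    have "(\<integral>\<^sup>+x. G x \<partial>Q) = (\<integral>\<^sup>+x. G x * indicator A x + G x * indicator Ac x \<partial>Q)"
      by (rule nn_integral_cong) (auto simp: Ac_def split: split_indicator)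
    also have "\<dots> = (\<integral>\<^sup>+x. G x * indicator A x \<partial>Q) + (\<integral>\<^sup>+x. G x * indicator Ac x \<partial>Q)"
      by (rule nn_integral_add) auto
    finally show ?thesis .
  qed
  have s1: "(\<integral>\<^sup>+x. ?Fp x \<partial>Q) = (\<integral>\<^sup>+x. ?Fp x * indicator A x \<partial>Q) + (\<integral>\<^sup>+x. ?Fp x * indicator Ac x \<partial>Q)"
    by (rule split) measurable
  have s2: "(\<integral>\<^sup>+x. ?Fm x \<partial>Q) = (\<integral>\<^sup>+x. ?Fm x * indicator A x \<partial>Q) + (\<integral>\<^sup>+x. ?Fm x * indicator Ac x \<partial>Q)"
    by (rule split) measurable
  note pA = piece_persp[OF adm Q P sP ac A] and pAc = piece_persp[OF adm Q P sP ac Ac]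
  have "f_div f P Q = (enn2ereal (\<integral>\<^sup>+x. ?Fp x * indicator A x \<partial>Q) - enn2ereal (\<integral>\<^sup>+x. ?Fm x * indicator A x \<partial>Q))
      + (enn2ereal (\<integral>\<^sup>+x. ?Fp x * indicator Ac x \<partial>Q) - enn2ereal (\<integral>\<^sup>+x. ?Fm x * indicator Ac x \<partial>Q))"
    unfolding f_div_def s1 s2 plus_ennreal.rep_eq
    by (rule ereal_split4) (use pA(1) pAc(1) in \<open>auto simp: less_top enn2ereal_eq_top_iff\<close>)
  moreover have "measure Q Ac = 1 - measure Q A" unfolding Ac_def using Q.prob_compl[OF A] .
  moreover have "measure P Ac = 1 - measure P A" unfolding Ac_def
    using P.prob_compl[of A] A sP sets_eq_imp_space_eq[OF sP] by simp
  ultimately show ?thesis unfolding hfun_def using pA(2) pAc(2) by (simp add: add_mono)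
qed



lemma adm_nm: "admissible_f f \<Longrightarrow> f x \<noteq> -\<infinity>"
  unfolding admissible_f_def by blast

lemma adm_f1: "admissible_f f \<Longrightarrow> f 1 = 0"
  unfolding admissible_f_def by blast

lemma persp_nm: "admissible_f f \<Longrightarrow> persp f b a \<noteq> -\<infinity>"
  using adm_nm[of f] by (auto simp: persp_def)

lemma hfun_nm: "admissible_f f \<Longrightarrow> hfun f z b \<noteq> -\<infinity>"
  using persp_nm[of f] by (simp add: hfun_def)

lemma hfun_diag:
  assumes adm: "admissible_f f" and "0 \<le> z" "z \<le> 1"
  shows "hfun f z z = 0"
  using assms adm_f1[OF adm] by (auto simp: hfun_def persp_def)

lemma conv1:
  assumes adm: "admissible_f f" and "0 \<le> l" "l \<le> 1"
  shows "f ((1 - l) * 1 + l * y) \<le> ereal l * f y"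
  using adm_convex_closed[OF adm assms(2,3), of 1 y] adm_f1[OF adm] by simp

lemma scale_le:
  fixes X Y :: ereal
  assumes "X \<le> ereal l * Y" "0 \<le> c"
  shows "ereal c * X \<le> ereal (c * l) * Y"
proof -
  have "ereal c * X \<le> ereal c * (ereal l * Y)" using assms by (intro ereal_mult_left_mono) auto
  also have "\<dots> = ereal (c * l) * Y" by (simp add: mult.assoc[symmetric])
  finally show ?thesis .
qed

lemma hfun_nonneg:
  assumes adm: "admissible_f f" and z: "0 \<le> z" "z \<le> 1" and b: "0 \<le> b" "b \<le> 1"
  shows "0 \<le> hfun f z b"
proof -
  have nm: "\<And>x. f x \<noteq> -\<infinity>" using adm_nm[OF adm] .
  have f1: "f 1 = 0" using adm_f1[OF adm] .
  consider "b = 0" | "b = 1" | "0 < b \<and> b < 1" using b by linarith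
  then show ?thesis
  proof cases
    case 1
    show ?thesis
    proof (cases "z = 0")
      case True then show ?thesis using 1 f1 by (simp add: hfun_def persp_def)
    next
      case False then show ?thesis using 1 nm[of "1 - z"] by (simp add: hfun_def persp_def)
    qed
  next
    case 2
    show ?thesis
    proof (cases "z = 1")
      case True then show ?thesis using 2 f1 by (simp add: hfun_def persp_def)
    next
      case False then show ?thesis using 2 nm[of z] by (simp add: hfun_def persp_def)
    qed
  next
    case 3
    have "(1 - (1 - b)) * (z / b) + (1 - b) * ((1 - z) / (1 - b)) = 1" using 3 by (simp add: field_simps)
    then have "0 \<le> ereal (1 - (1 - b)) * f (z / b) + ereal (1 - b) * f ((1 - z) / (1 - b))"
      using adm_convex_closed[OF adm, of "1 - b" "z / b" "(1 - z) / (1 - b)"] 3 f1 by simp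
    then show ?thesis using 3 by (simp add: hfun_def persp_def)
  qed
qed

lemma ereal_u_le:
  fixes H :: ereal
  assumes "0 \<le> H" "0 \<le> u" "u \<le> 1"
  shows "ereal u * H \<le> H"
  using assms by (cases H) (auto simp: mult_left_le_one_le)

lemma ereal_u_distrib:
  fixes X Y :: ereal
  assumes "X \<noteq> -\<infinity>" "Y \<noteq> -\<infinity>" "0 \<le> u"
  shows "ereal u * X + ereal u * Y = ereal u * (X + Y)"
proof (cases "u = 0")
  case True then show ?thesis by (simp add: zero_ereal_def[symmetric])
next
  case False
  then have "u > 0" using assms(3) by simp
  then show ?thesis using assms by (cases X; cases Y) (auto simp: algebra_simps)
qed

lemma hfun_mono:
  assumes adm: "admissible_f f" and z: "0 \<le> z" "z \<le> b1" and b: "b1 \<le> b2" "b2 \<le> 1"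
  shows "hfun f z b1 \<le> hfun f z b2"
proof -
  have nm: "\<And>x. f x \<noteq> -\<infinity>" using adm_nm[OF adm] .
  consider "b1 = b2" | "z = b1 \<and> b1 < b2" | "z < b1 \<and> b1 < b2 \<and> b2 = 1" | "z < b1 \<and> b1 < b2 \<and> b2 < 1"
    using z b by linarith
  then show ?thesis
  proof cases
    case 1 then show ?thesis by simp
  next
    case 2 then show ?thesis using hfun_diag[OF adm z(1)] hfun_nonneg[OF adm z(1) _ _ b(2)] z b by simp
  next
    case 3 then show ?thesis using nm[of z] z by (simp add: hfun_def persp_def)
  next
    case 4
    have b1p: "b1 > 0" and b2p: "b2 > 0" using 4 z by linarith+
    define u where "u = (b1 - z) / (b2 - z)"
    have u0: "0 \<le> u" and u1: "u \<le> 1" using 4 z by (auto simp: u_def field_simps)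
    define l where "l = u * b2 / b1"
    have l0: "0 \<le> l" using u0 b1p b2p by (simp add: l_def)
    have "u * b2 \<le> b1"
    proof -
      have "b1 * z \<le> b2 * z" using 4 z by (intro mult_right_mono) auto
      then have "(b1 - z) * b2 \<le> b1 * (b2 - z)" by (simp add: algebra_simps)
      then show ?thesis using 4 by (simp add: u_def field_simps)
    qed
    then have l1: "l \<le> 1" using b1p by (simp add: l_def)
    have ub: "u * (b2 - z) = b1 - z" using 4 by (simp add: u_def)
    have "(1 - l) * 1 + l * (z / b2) = (b1 - u * (b2 - z)) / b1"
      using b1p b2p by (simp add: l_def field_simps)
    then have eq1: "(1 - l) * 1 + l * (z / b2) = z / b1" using ub by simp
    have T1: "f (z / b1) \<le> ereal l * f (z / b2)" using conv1[OF adm l0 l1, of "z / b2"] eq1 by simp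
    have bl: "b1 * l = u * b2" using b1p by (simp add: l_def)
    have P1: "persp f b1 z \<le> ereal u * persp f b2 z"
      using scale_le[OF T1, of b1] b1p b2p bl by (simp add: persp_def mult.assoc[symmetric] mult.commute)
    define m where "m = u * (1 - b2) / (1 - b1)"
    have m0: "0 \<le> m" using u0 4 by (simp add: m_def)
    have "u * (1 - b2) \<le> 1 - b1"
    proof -
      have "0 \<le> (b2 - b1) * (1 - z)" using 4 by (intro mult_nonneg_nonneg) auto
      then have "(b1 - z) * (1 - b2) \<le> (1 - b1) * (b2 - z)" by (simp add: algebra_simps)
      then show ?thesis using 4 by (simp add: u_def field_simps)
    qed
    then have m1: "m \<le> 1" using 4 by (simp add: m_def)
    have c1: "m * ((1 - z) / (1 - b2)) = (u * (1 - z)) / (1 - b1)" using 4 by (simp add: m_def)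
    have c2: "1 - m = (1 - b1 - u * (1 - b2)) / (1 - b1)" using 4 by (simp add: m_def field_simps)
    have "(1 - m) * 1 + m * ((1 - z) / (1 - b2)) = (1 - b1 - u * (1 - b2) + u * (1 - z)) / (1 - b1)"
      unfolding c1 c2 by (simp add: add_divide_distrib)
    also have "1 - b1 - u * (1 - b2) + u * (1 - z) = 1 - b1 + u * (b2 - z)" by (simp add: algebra_simps)
    finally have "(1 - m) * 1 + m * ((1 - z) / (1 - b2)) = (1 - b1 + u * (b2 - z)) / (1 - b1)" .
    then have eq2: "(1 - m) * 1 + m * ((1 - z) / (1 - b2)) = (1 - z) / (1 - b1)" using ub by simp
    have T2: "f ((1 - z) / (1 - b1)) \<le> ereal m * f ((1 - z) / (1 - b2))"
      using conv1[OF adm m0 m1, of "(1 - z) / (1 - b2)"] eq2 by simp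
    have bm: "(1 - b1) * m = u * (1 - b2)" using 4 by (simp add: m_def)
    have P2: "persp f (1 - b1) (1 - z) \<le> ereal u * persp f (1 - b2) (1 - z)"
      using scale_le[OF T2, of "1 - b1"] 4 bm by (simp add: persp_def mult.assoc[symmetric] mult.commute)
    have "hfun f z b1 \<le> ereal u * persp f b2 z + ereal u * persp f (1 - b2) (1 - z)"
      unfolding hfun_def using P1 P2 by (rule add_mono)
    also have "\<dots> = ereal u * hfun f z b2"
      unfolding hfun_def using persp_nm[OF adm] u0 by (intro ereal_u_distrib) auto
    also have "\<dots> \<le> hfun f z b2"
      using ereal_u_le[OF hfun_nonneg[OF adm z(1) _ _ b(2)] u0 u1] z b by simp
    finally show ?thesis .
  qed
qed



lemma pos_neg:
  assumes "v \<noteq> -\<infinity>" "0 \<le> c"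
  shows "enn2ereal (e2ennreal v * ennreal c) - enn2ereal (e2ennreal (- v) * ennreal c) = ereal c * v"
proof (cases v)
  case (real a)
  have cv: "ereal c * v = ereal (a * c)" using real by simp
  show ?thesis
  proof (cases "0 \<le> a")
    case True
    then have e1: "e2ennreal v * ennreal c = ennreal (a * c)" using real assms(2) by (simp add: ennreal_mult)
    have e2: "e2ennreal (- v) * ennreal c = 0" using real True by (simp add: ennreal_neg)
    have "0 \<le> a * c" using True assms(2) by simp
    then show ?thesis unfolding e1 e2 cv by (simp add: zero_ennreal.rep_eq)
  next
    case False
    have "ennreal (- a) * ennreal c = ennreal (- a * c)"
      by (rule ennreal_mult[symmetric]) (use False assms in auto)
    then have e1: "e2ennreal (- v) * ennreal c = ennreal (- a * c)" using real by simp
    have e2: "e2ennreal v * ennreal c = 0" using real False by (simp add: ennreal_neg)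
    have "0 \<le> - a * c" using False assms(2) by (simp add: mult_nonpos_nonneg)
    then show ?thesis unfolding e1 e2 cv by (simp add: zero_ennreal.rep_eq)
  qed
next
  case PInf
  show ?thesis
  proof (cases "c = 0")
    case True then show ?thesis using PInf by (simp add: zero_ereal_def[symmetric])
  next
    case False
    then have "c > 0" using assms(2) by simp
    then show ?thesis using PInf by (simp add: e2ennreal_neg ennreal_mult_top)
  qed
qed (use assms in simp)

lemma construct:
  fixes Q :: "'a measure"
  assumes adm: "admissible_f f" and Q: "prob_space Q" and A: "A \<in> sets Q"
    and a: "0 \<le> a" and b: "0 \<le> b" and ab: "a * measure Q A + b * (1 - measure Q A) = 1"
  defines "P \<equiv> density Q (\<lambda>x. ennreal a * indicator A x + ennreal b * indicator (space Q - A) x)"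
  shows "prob_space P" "sets P = sets Q" "absolutely_continuous Q P"
    "measure P A = a * measure Q A"
    "f_div f P Q = ereal (measure Q A) * f a + ereal (1 - measure Q A) * f b"
proof -
  interpret Q: prob_space Q by fact
  define Ac where "Ac = space Q - A"
  define g where "g = (\<lambda>x. ennreal a * indicator A x + ennreal b * indicator Ac x)"
  define \<beta> where "\<beta> = measure Q A"
  have Ac: "Ac \<in> sets Q" using A by (simp add: Ac_def)
  note [measurable] = A Ac
  have fm[measurable]: "f \<in> borel_measurable borel" using f_meas[OF adm] .
  have gm[measurable]: "g \<in> borel_measurable Q" unfolding g_def by measurable
  have Pg: "P = density Q g" unfolding P_def g_def Ac_def ..
  have b0: "0 \<le> \<beta>" "\<beta> \<le> 1" unfolding \<beta>_def by auto
  have QA: "emeasure Q A = ennreal \<beta>" unfolding \<beta>_def using Q.emeasure_eq_measure by simp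
  have QAc: "emeasure Q Ac = ennreal (1 - \<beta>)" unfolding \<beta>_def Ac_def
    using Q.prob_compl[OF A] Q.emeasure_eq_measure by simp
  show sP: "sets P = sets Q" unfolding Pg by simp
  have spP: "space P = space Q" unfolding Pg by simp
  have intg: "(\<integral>\<^sup>+x. g x * indicator X x \<partial>Q) = ennreal a * emeasure Q (A \<inter> X) + ennreal b * emeasure Q (Ac \<inter> X)"
    if X: "X \<in> sets Q" for X
  proof -
    have "(\<integral>\<^sup>+x. g x * indicator X x \<partial>Q) = (\<integral>\<^sup>+x. ennreal a * indicator (A \<inter> X) x + ennreal b * indicator (Ac \<inter> X) x \<partial>Q)"
      by (rule nn_integral_cong) (auto simp: g_def split: split_indicator)
    also have "\<dots> = (\<integral>\<^sup>+x. ennreal a * indicator (A \<inter> X) x \<partial>Q) + (\<integral>\<^sup>+x. ennreal b * indicator (Ac \<inter> X) x \<partial>Q)"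
      by (rule nn_integral_add) (use X in auto)
    also have "\<dots> = ennreal a * emeasure Q (A \<inter> X) + ennreal b * emeasure Q (Ac \<inter> X)"
      using X by (simp add: nn_integral_cmult_indicator)
    finally show ?thesis .
  qed
  have eP: "emeasure P X = ennreal a * emeasure Q (A \<inter> X) + ennreal b * emeasure Q (Ac \<inter> X)"
    if X: "X \<in> sets Q" for X
    unfolding Pg using emeasure_density[OF gm X] intg[OF X] by simp
  have "emeasure P (space P) = ennreal a * ennreal \<beta> + ennreal b * ennreal (1 - \<beta>)"
    using eP[of "space Q"] spP QA QAc A Ac sets.sets_into_space[OF A] by (simp add: Ac_def Int_absorb2 Int_absorb1)
  also have "\<dots> = ennreal (a * \<beta> + b * (1 - \<beta>))" using a b b0 by (simp add: ennreal_mult ennreal_plus)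
  also have "\<dots> = 1" using ab by (simp add: \<beta>_def)
  finally show "prob_space P" by (rule prob_spaceI)
  have "emeasure P A = ennreal a * ennreal \<beta>"
  proof -
    have "(space Q - A) \<inter> A = {}" by blast
    then show ?thesis using eP[OF A] QA by (simp add: Ac_def)
  qed
  then show "measure P A = a * measure Q A" using a b0 by (simp add: measure_def ennreal_mult[symmetric] \<beta>_def)
  show "absolutely_continuous Q P" unfolding Pg by (rule absolutely_continuousI_density) (rule gm)
  have RN: "AE x in Q. g x = RN_deriv Q P x" unfolding Pg by (rule Q.RN_deriv_unique[OF gm refl])
  have cong: "(\<integral>\<^sup>+x. e2ennreal (F (enn2real (RN_deriv Q P x))) \<partial>Q) =
      e2ennreal (F a) * ennreal \<beta> + e2ennreal (F b) * ennreal (1 - \<beta>)"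
    if Fm[measurable]: "F \<in> borel_measurable borel" for F :: "real \<Rightarrow> ereal"
  proof -
    have "(\<integral>\<^sup>+x. e2ennreal (F (enn2real (RN_deriv Q P x))) \<partial>Q) =
        (\<integral>\<^sup>+x. e2ennreal (F a) * indicator A x + e2ennreal (F b) * indicator Ac x \<partial>Q)"
    proof (rule nn_integral_cong_AE)
      show "AE x in Q. e2ennreal (F (enn2real (RN_deriv Q P x))) = e2ennreal (F a) * indicator A x + e2ennreal (F b) * indicator Ac x"
        using RN
      proof (rule AE_mp[OF _ AE_I2[OF impI]])
        fix x assume x: "x \<in> space Q" "g x = RN_deriv Q P x"
        show "e2ennreal (F (enn2real (RN_deriv Q P x))) = e2ennreal (F a) * indicator A x + e2ennreal (F b) * indicator Ac x"
        proof (cases "x \<in> A")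
          case True
          have "RN_deriv Q P x = ennreal a" using x(2)[symmetric] True by (simp add: g_def Ac_def)
          then show ?thesis using True a by (simp add: Ac_def)
        next
          case False
          have "RN_deriv Q P x = ennreal b" using x(2)[symmetric] x(1) False by (simp add: g_def Ac_def)
          then show ?thesis using False x(1) b by (simp add: Ac_def)
        qed
      qed
    qed
    also have "\<dots> = (\<integral>\<^sup>+x. e2ennreal (F a) * indicator A x \<partial>Q) + (\<integral>\<^sup>+x. e2ennreal (F b) * indicator Ac x \<partial>Q)"
      by (rule nn_integral_add) auto
    also have "\<dots> = e2ennreal (F a) * ennreal \<beta> + e2ennreal (F b) * ennreal (1 - \<beta>)"
      using QA QAc by (simp add: nn_integral_cmult_indicator)
    finally show ?thesis .
  qed
  have nm: "\<And>x. f x \<noteq> -\<infinity>" using adm_nm[OF adm] .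
  have fm2: "(\<lambda>x. - f x) \<in> borel_measurable borel" by measurable
  have fin: "e2ennreal (- f y) * ennreal c \<noteq> \<infinity>" for y c
  proof -
    have "e2ennreal (- f y) \<noteq> \<infinity>" using nm[of y] by (cases "f y") (auto simp: e2ennreal_neg)
    then show ?thesis by (simp add: ennreal_mult_eq_top_iff)
  qed
  have "f_div f P Q = (enn2ereal (e2ennreal (f a) * ennreal \<beta>) - enn2ereal (e2ennreal (- f a) * ennreal \<beta>))
     + (enn2ereal (e2ennreal (f b) * ennreal (1 - \<beta>)) - enn2ereal (e2ennreal (- f b) * ennreal (1 - \<beta>)))"
    unfolding f_div_def cong[OF fm] cong[OF fm2] plus_ennreal.rep_eq
    by (rule ereal_split4) (use fin in \<open>auto simp: enn2ereal_eq_top_iff\<close>)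
  also have "\<dots> = ereal \<beta> * f a + ereal (1 - \<beta>) * f b"
    using pos_neg[OF nm] b0 by simp
  finally show "f_div f P Q = ereal (measure Q A) * f a + ereal (1 - measure Q A) * f b"
    by (simp add: \<beta>_def)
qed



lemma witness:
  fixes Q :: "'a measure"
  assumes adm: "admissible_f f" and Q: "prob_space Q" and A: "A \<in> sets Q"
    and z: "0 \<le> z" "z \<le> 1" and hz: "hfun f z (measure Q A) \<le> ereal \<rho>" and rho: "0 < \<rho>"
  shows "\<exists>P. prob_space P \<and> sets P = sets Q \<and> absolutely_continuous Q P \<and>
      f_div f P Q \<le> ereal \<rho> \<and> measure P A = z"
proof -
  interpret Q: prob_space Q by fact
  define \<beta> where "\<beta> = measure Q A"
  have b0: "0 \<le> \<beta>" "\<beta> \<le> 1" unfolding \<beta>_def by auto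
  have nm: "\<And>x. f x \<noteq> -\<infinity>" using adm_nm[OF adm] .
  have f1: "f 1 = 0" using adm_f1[OF adm] .
  consider "\<beta> = 0" | "\<beta> = 1" | "0 < \<beta> \<and> \<beta> < 1" using b0 by linarith
  then show ?thesis
  proof cases
    case 1
    have "z = 0"
    proof (rule ccontr)
      assume "z \<noteq> 0"
      then have "hfun f z \<beta> = \<infinity>" using 1 nm[of "1 - z"] by (simp add: hfun_def persp_def)
      then show False using hz by (simp add: \<beta>_def)
    qed
    note c = construct[OF adm Q A, of 1 1]
    show ?thesis
      using c 1 \<open>z = 0\<close> f1 rho by (intro exI[of _ "density Q (\<lambda>x. ennreal 1 * indicator A x + ennreal 1 * indicator (space Q - A) x)"]) (simp add: \<beta>_def)
  next
    case 2
    have "z = 1"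
    proof (rule ccontr)
      assume "z \<noteq> 1"
      then have "hfun f z \<beta> = \<infinity>" using 2 nm[of z] by (simp add: hfun_def persp_def)
      then show False using hz by (simp add: \<beta>_def)
    qed
    note c = construct[OF adm Q A, of 1 1]
    show ?thesis
      using c 2 \<open>z = 1\<close> f1 rho by (intro exI[of _ "density Q (\<lambda>x. ennreal 1 * indicator A x + ennreal 1 * indicator (space Q - A) x)"]) (simp add: \<beta>_def)
  next
    case 3
    define a where "a = z / \<beta>"
    define b where "b = (1 - z) / (1 - \<beta>)"
    have a0: "0 \<le> a" using z 3 by (simp add: a_def)
    have bb0: "0 \<le> b" using z 3 by (simp add: b_def)
    have ab: "a * measure Q A + b * (1 - measure Q A) = 1" using 3 by (simp add: a_def b_def \<beta>_def[symmetric])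
    note c = construct[OF adm Q A a0 bb0 ab]
    have "f_div f (density Q (\<lambda>x. ennreal a * indicator A x + ennreal b * indicator (space Q - A) x)) Q = hfun f z \<beta>"
      using c(5) 3 by (simp add: hfun_def persp_def a_def b_def \<beta>_def)
    moreover have "a * measure Q A = z" using 3 by (simp add: a_def \<beta>_def[symmetric])
    ultimately show ?thesis
      using c hz by (intro exI[of _ "density Q (\<lambda>x. ennreal a * indicator A x + ennreal b * indicator (space Q - A) x)"]) (simp add: \<beta>_def)
  qed
qed



theorem lemma18:
  fixes X :: "'x measure" and Y :: "'y measure"
    and s :: "'x \<times> 'y \<Rightarrow> real"
    and S :: "nat \<Rightarrow> ('x \<times> 'y) measure"
    and d :: nat and f :: "real \<Rightarrow> ereal" and \<rho> :: real and t :: real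
  assumes "s \<in> borel_measurable (X \<Otimes>\<^sub>M Y)"
    and "d \<ge> 1"
    and "\<And>i. i \<in> {1..d} \<Longrightarrow> prob_space (S i)"
    and "\<And>i. i \<in> {1..d} \<Longrightarrow> sets (S i) = sets (X \<Otimes>\<^sub>M Y)"
    and "admissible_f f"
    and "\<rho> > 0"
  shows "worst_cdf f \<rho> d S s t = g_vec f \<rho> d (\<lambda>i. push_cdf (S i) s t)
       \<and> g_vec f \<rho> d (\<lambda>i. push_cdf (S i) s t)
           = g_one f \<rho> (Min ((\<lambda>i. push_cdf (S i) s t) ` {1..d}))"
proof -
  note sm = assms(1) and d1 = assms(2) and Sp = assms(3) and sS = assms(4) and adm = assms(5) and rho = assms(6)
  define \<mu> where "\<mu> = (\<lambda>i. distr (S i) borel s)"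
  define F where "F = (\<lambda>i. push_cdf (S i) s t)"
  define A where "A = {..t}"
  have Ab: "A \<in> sets borel" unfolding A_def by simp
  have smi: "s \<in> measurable (S i) borel" if "i \<in> {1..d}" for i
    using sm measurable_cong_sets[OF sS[OF that], of borel borel] by metis
  have mup: "prob_space (\<mu> i)" if "i \<in> {1..d}" for i
    unfolding \<mu>_def using prob_space.prob_space_distr[OF Sp[OF that] smi[OF that]] .
  have smu: "sets (\<mu> i) = sets borel" for i unfolding \<mu>_def by simp
  have Fmu: "F i = measure (\<mu> i) A" for i unfolding F_def \<mu>_def A_def push_cdf_def ..
  have F01: "0 \<le> F i \<and> F i \<le> 1" if "i \<in> {1..d}" for i
    unfolding Fmu using prob_space.prob_le_1[OF mup[OF that]] by simp
  define Fm where "Fm = Min (F ` {1..d})"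
  have ne: "{1..d} \<noteq> {}" using d1 by simp
  have Fm_le: "Fm \<le> F i" if "i \<in> {1..d}" for i unfolding Fm_def using that by simp
  have "Fm \<in> F ` {1..d}" unfolding Fm_def by (rule Min_in) (use ne in auto)
  then obtain k where k: "k \<in> {1..d}" "F k = Fm" by (metis imageE)
  have Fm01: "0 \<le> Fm" "Fm \<le> 1" using F01[OF k(1)] k(2) by auto
  define Z where "Z = {z \<in> {0..1}. hfun f z Fm \<le> ereal \<rho>}"
  have gone: "g_one f \<rho> Fm = Inf Z" unfolding g_one_def Z_def ..
  have FmZ: "Fm \<in> Z" unfolding Z_def using Fm01 hfun_diag[OF adm Fm01] rho by simp
  have bddZ: "bdd_below Z" unfolding Z_def by (rule bdd_belowI[of _ 0]) auto
  have GleFm: "Inf Z \<le> Fm" using cInf_lower[OF FmZ bddZ] .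
  have comb: "Fm \<le> (\<Sum>i=1..d. w i * F i) \<and> (\<Sum>i=1..d. w i * F i) \<le> 1" if w: "w \<in> wsimplex d" for w
  proof -
    have w0: "\<And>i. i \<in> {1..d} \<Longrightarrow> 0 \<le> w i" and w1: "(\<Sum>i=1..d. w i) = 1"
      using w unfolding wsimplex_def by auto
    have "(\<Sum>i=1..d. w i * Fm) \<le> (\<Sum>i=1..d. w i * F i)"
      by (rule sum_mono) (use w0 Fm_le in \<open>auto intro: mult_left_mono\<close>)
    moreover have "(\<Sum>i=1..d. w i * Fm) = Fm" using w1 by (simp add: sum_distrib_right[symmetric])
    moreover have "(\<Sum>i=1..d. w i * F i) \<le> (\<Sum>i=1..d. w i * 1)"
    proof (rule sum_mono)
      fix i assume i: "i \<in> {1..d}"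
      show "w i * F i \<le> w i * 1" using w0[OF i] F01[OF i] by (intro mult_left_mono) auto
    qed
    ultimately show ?thesis using w1 by simp
  qed
  define ek where "ek = (\<lambda>i::nat. if i = k then (1::real) else 0)"
  have ek: "ek \<in> wsimplex d" unfolding wsimplex_def ek_def using k(1) by simp
  have ekF: "(\<Sum>i=1..d. ek i * F i) = Fm"
  proof -
    have "(\<Sum>i=1..d. ek i * F i) = (\<Sum>i\<in>{1..d}. if i = k then F k else 0)"
      by (rule sum.cong) (auto simp: ek_def)
    also have "\<dots> = F k" using k(1) by simp
    finally show ?thesis using k(2) by simp
  qed
  define Z1 where "Z1 = {z \<in> {0..1}. (INF w\<in>wsimplex d. hfun f z (\<Sum>i=1..d. w i * F i)) \<le> ereal \<rho>}"
  have gvec: "g_vec f \<rho> d F = Inf Z1" unfolding g_vec_def Z1_def ..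
  have ZZ1: "Z \<subseteq> Z1"
  proof
    fix z assume z: "z \<in> Z"
    have "(INF w\<in>wsimplex d. hfun f z (\<Sum>i=1..d. w i * F i)) \<le> hfun f z Fm"
      using INF_lower[OF ek, of "\<lambda>w. hfun f z (\<Sum>i=1..d. w i * F i)"] ekF by simp
    then show "z \<in> Z1" using z unfolding Z_def Z1_def by auto
  qed
  have Z1ge: "Inf Z \<le> z" if z: "z \<in> Z1" for z
  proof (cases "Fm \<le> z")
    case True then show ?thesis using GleFm by simp
  next
    case False
    have z01: "0 \<le> z" "z \<le> 1" using z unfolding Z1_def by auto
    have "hfun f z Fm \<le> (INF w\<in>wsimplex d. hfun f z (\<Sum>i=1..d. w i * F i))"
    proof (rule INF_greatest)
      fix w assume "w \<in> wsimplex d"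
      from comb[OF this] show "hfun f z Fm \<le> hfun f z (\<Sum>i=1..d. w i * F i)"
        using hfun_mono[OF adm z01(1)] False by simp
    qed
    also have "\<dots> \<le> ereal \<rho>" using z unfolding Z1_def by simp
    finally have "z \<in> Z" unfolding Z_def using z01 by simp
    then show ?thesis by (rule cInf_lower[OF _ bddZ])
  qed
  have bddZ1: "bdd_below Z1" unfolding Z1_def by (rule bdd_belowI[of _ 0]) auto
  have "Inf Z1 = Inf Z"
  proof (rule antisym)
    show "Inf Z1 \<le> Inf Z" by (rule cInf_superset_mono[OF _ bddZ1 ZZ1]) (use FmZ in auto)
    show "Inf Z \<le> Inf Z1" by (rule cInf_greatest) (use ZZ1 FmZ Z1ge in auto)
  qed
  then have part2: "g_vec f \<rho> d F = g_one f \<rho> Fm" using gvec gone by simp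
  define V where "V = (\<lambda>P. measure P {..t}) ` amb_set f \<rho> d S s"
  have wc: "worst_cdf f \<rho> d S s t = Inf V" unfolding worst_cdf_def V_def ..
  have inV: "z \<in> V" if z: "z \<in> Z" for z
  proof -
    have z01: "0 \<le> z" "z \<le> 1" and hz: "hfun f z (measure (\<mu> k) A) \<le> ereal \<rho>"
      using z k unfolding Z_def Fmu by auto
    obtain P where P: "prob_space P" "sets P = sets (\<mu> k)" "absolutely_continuous (\<mu> k) P"
      "f_div f P (\<mu> k) \<le> ereal \<rho>" "measure P A = z"
      using witness[OF adm mup[OF k(1)] _ z01 hz rho] Ab smu by auto
    have hull: "in_conv_hull d S s (\<mu> k)"
      unfolding in_conv_hull_def
    proof (intro conjI bexI[OF _ ek] ballI)
      show "sets (\<mu> k) = sets borel" by (rule smu)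
      fix B :: "real set" assume "B \<in> sets borel"
      have "(\<Sum>i=1..d. ennreal (ek i) * emeasure (distr (S i) borel s) B)
          = (\<Sum>i\<in>{1..d}. if i = k then emeasure (\<mu> k) B else 0)"
        by (rule sum.cong) (auto simp: ek_def \<mu>_def)
      also have "\<dots> = emeasure (\<mu> k) B" using k(1) by simp
      finally show "emeasure (\<mu> k) B = (\<Sum>i=1..d. ennreal (ek i) * emeasure (distr (S i) borel s) B)" by simp
    qed
    have "P \<in> amb_set f \<rho> d S s"
      unfolding amb_set_def using P hull smu by auto
    then show ?thesis unfolding V_def using P(5) A_def by force
  qed
  have geV: "Inf Z \<le> v" if v: "v \<in> V" for v
  proof -
    obtain P where P: "P \<in> amb_set f \<rho> d S s" and vP: "v = measure P A"
      using v unfolding V_def A_def by auto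
    obtain S0 where Pp: "prob_space P" and sP: "sets P = sets borel" and hull: "in_conv_hull d S s S0"
      and ac: "absolutely_continuous S0 P" and fd: "f_div f P S0 \<le> ereal \<rho>"
      using P unfolding amb_set_def by auto
    obtain w where sS0: "sets S0 = sets borel" and w: "w \<in> wsimplex d"
      and eS0: "\<And>B. B \<in> sets borel \<Longrightarrow> emeasure S0 B = (\<Sum>i=1..d. ennreal (w i) * emeasure (\<mu> i) B)"
      using hull unfolding in_conv_hull_def \<mu>_def by auto
    have w0: "\<And>i. i \<in> {1..d} \<Longrightarrow> 0 \<le> w i" and w1: "(\<Sum>i=1..d. w i) = 1"
      using w unfolding wsimplex_def by auto
    have spS0: "space S0 = UNIV" using sets_eq_imp_space_eq[OF sS0] by simp
    have "emeasure S0 (space S0) = (\<Sum>i=1..d. ennreal (w i) * emeasure (\<mu> i) UNIV)"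
      using eS0[of UNIV] spS0 by simp
    also have "\<dots> = (\<Sum>i=1..d. ennreal (w i))"
    proof (rule sum.cong[OF refl])
      fix i assume i: "i \<in> {1..d}"
      have "emeasure (\<mu> i) (space (\<mu> i)) = 1" using prob_space.emeasure_space_1[OF mup[OF i]] .
      moreover have "space (\<mu> i) = UNIV" unfolding \<mu>_def by simp
      ultimately show "ennreal (w i) * emeasure (\<mu> i) UNIV = ennreal (w i)" by simp
    qed
    also have "\<dots> = ennreal (\<Sum>i=1..d. w i)" by (rule sum_ennreal) (use w0 in auto)
    finally have "emeasure S0 (space S0) = 1" using w1 by simp
    then have S0p: "prob_space S0" by (rule prob_spaceI)
    have "emeasure S0 A = (\<Sum>i=1..d. ennreal (w i) * emeasure (\<mu> i) A)" using eS0[OF Ab] .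
    also have "\<dots> = (\<Sum>i=1..d. ennreal (w i * F i))"
    proof (rule sum.cong[OF refl])
      fix i assume i: "i \<in> {1..d}"
      have "emeasure (\<mu> i) A = ennreal (F i)"
        unfolding Fmu using finite_measure.emeasure_eq_measure[OF prob_space.axioms(1)[OF mup[OF i]]] by simp
      then show "ennreal (w i) * emeasure (\<mu> i) A = ennreal (w i * F i)"
        using w0[OF i] F01[OF i] by (simp add: ennreal_mult)
    qed
    also have "\<dots> = ennreal (\<Sum>i=1..d. w i * F i)" by (rule sum_ennreal) (use w0 F01 in auto)
    finally have "emeasure S0 A = ennreal (\<Sum>i=1..d. w i * F i)" .
    moreover have "0 \<le> (\<Sum>i=1..d. w i * F i)"
      by (rule sum_nonneg) (use w0 F01 in auto)
    ultimately have mS0: "measure S0 A = (\<Sum>i=1..d. w i * F i)"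
      by (simp add: measure_def)
    have bb: "Fm \<le> measure S0 A" "measure S0 A \<le> 1" using comb[OF w] mS0 by auto
    have "hfun f (measure P A) (measure S0 A) \<le> f_div f P S0"
      by (rule data_processing[OF adm S0p Pp]) (use sP sS0 ac Ab in auto)
    also note fd
    finally have hP: "hfun f (measure P A) (measure S0 A) \<le> ereal \<rho>" .
    have a01: "0 \<le> measure P A" "measure P A \<le> 1" using prob_space.prob_le_1[OF Pp] by auto
    show ?thesis
    proof (cases "Fm \<le> measure P A")
      case True then show ?thesis using GleFm vP by simp
    next
      case False
      have "hfun f (measure P A) Fm \<le> hfun f (measure P A) (measure S0 A)"
        by (rule hfun_mono[OF adm a01(1)]) (use False bb in auto)
      also note hP
      finally have "measure P A \<in> Z" unfolding Z_def using a01 by simp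
      then show ?thesis using cInf_lower[OF _ bddZ] vP by simp
    qed
  qed
  have Vne: "V \<noteq> {}" using inV[OF FmZ] by auto
  have bddV: "bdd_below V" by (rule bdd_belowI[of _ "Inf Z"]) (rule geV)
  have "Inf V = Inf Z"
  proof (rule antisym)
    show "Inf Z \<le> Inf V" by (rule cInf_greatest[OF Vne geV])
    show "Inf V \<le> Inf Z"
      by (rule cInf_greatest) (use FmZ inV cInf_lower[OF _ bddV] in auto)
  qed
  then have part1: "worst_cdf f \<rho> d S s t = g_one f \<rho> Fm" using wc gone by simp
  show ?thesis using part1 part2 unfolding F_def Fm_def by simp
qed

end
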